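(* Let $\Phi:\{1,\dots,B\}\to\mathcal{A}=\{1,\dots,A\}$ and let $\Delta(\varepsilon)$ be a $B\times B$ stochastic matrix family normally parameterized by $\varepsilon\ge0$; let $Z=\Phi(Y)$ where $Y$ is the stationary Markov chain with transition matrix $\Delta(\varepsilon)$. Let $z_{-m}^0\in\mathcal{A}^{m+1}$ and $\hat z_{-\hat m}^0\in\mathcal{A}^{\hat m+1}$ be two sequences, and let $n\le m,\hat m$ and $k\ge 0$ be such that $z_{-n}^0=\hat z_{-n}^0$ and $$\mathrm{ord}\big(p(z_{-n}^{-1}\mid z_{-m}^{-n-1})\big)\le k,\qquad \mathrm{ord}\big(p(\hat z_{-n}^{-1}\mid \hat z_{-\hat m}^{-n-1})\big)\le k.$$ Then $b_j(z_{-m}^0)=b_j(\hat z_{-\hat m}^0)$ for all $j$ with $0\le j\le n-4k-1$.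
   Context: For $a\in\mathcal{A}$, $\Delta_a$ is the $B\times B$ matrix with $\Delta_a(i,j)=\Delta(i,j)$ if $\Phi(j)=a$ and $0$ otherwise. A matrix family is a weak Black Hole if every $\Delta_a$ is either the zero matrix or of rank one. $\Delta(\varepsilon)$ is normally parameterized by $\varepsilon\ge0$ if (i) each entry is analytic at $\varepsilon=0$, (ii) for $\varepsilon>0$, $\Delta(\varepsilon)$ is non-negative and irreducible, (iii) $\Delta(0)$ is a weak Black Hole. For $\varepsilon>0$ all probabilities refer to the stationary chain; conditional probabilities of hidden-Markov sequences are analytic around $\varepsilon=0$. For a function $f$ analytic at $\varepsilon=0$, $\mathrm{ord}(f)$ is the degree of the first nonzero term of its Taylor series at $0$. $b_j(z_{-m}^0)$ denotes the coefficient of $\varepsilon^j$ in the Taylor expansion of $p(z_0\mid z_{-m}^{-1})=P(Z_0=z_0\mid Z_{-m}^{-1}=z_{-m}^{-1})$ around $\varepsilon=0$. Notation: $z_{s}^{t}=(z_s,\dots,z_t)$. *)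

theory Defs
  imports "HOL-Analysis.Analysis" "HOL-Library.Extended_Nat"
begin

text \<open>States of the Markov chain: a finite type 'b (playing the role of {1..B});
  alphabet: a finite type 'a (playing the role of {1..A}).\<close>

definition stochastic :: "('b::finite \<Rightarrow> 'b \<Rightarrow> real) \<Rightarrow> bool" where
  "stochastic M \<longleftrightarrow> (\<forall>i j. M i j \<ge> 0) \<and> (\<forall>i. (\<Sum>j\<in>UNIV. M i j) = 1)"

fun mpow :: "('b::finite \<Rightarrow> 'b \<Rightarrow> real) \<Rightarrow> nat \<Rightarrow> 'b \<Rightarrow> 'b \<Rightarrow> real" where
  "mpow M 0 i j = (if i = j then 1 else 0)"
| "mpow M (Suc n) i j = (\<Sum>k\<in>UNIV. mpow M n i k * M k j)"

definition nonneg_matrix :: "('b::finite \<Rightarrow> 'b \<Rightarrow> real) \<Rightarrow> bool" where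
  "nonneg_matrix M \<longleftrightarrow> (\<forall>i j. M i j \<ge> 0)"

definition irreducible_matrix :: "('b::finite \<Rightarrow> 'b \<Rightarrow> real) \<Rightarrow> bool" where
  "irreducible_matrix M \<longleftrightarrow> (\<forall>i j. \<exists>n. mpow M n i j > 0)"

definition sub_matrix :: "('b \<Rightarrow> 'a) \<Rightarrow> ('b \<Rightarrow> 'b \<Rightarrow> real) \<Rightarrow> 'a \<Rightarrow> 'b \<Rightarrow> 'b \<Rightarrow> real" where
  "sub_matrix Phi M a i j = (if Phi j = a then M i j else 0)"

definition to_vec_matrix :: "('b::finite \<Rightarrow> 'b \<Rightarrow> real) \<Rightarrow> real^'b^'b" where
  "to_vec_matrix M = (\<chi> i j. M i j)"

definition weak_black_hole :: "('b::finite \<Rightarrow> 'a) \<Rightarrow> ('b \<Rightarrow> 'b \<Rightarrow> real) \<Rightarrow> bool" where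
  "weak_black_hole Phi M \<longleftrightarrow>
     (\<forall>a. (\<forall>i j. sub_matrix Phi M a i j = 0) \<or> rank (to_vec_matrix (sub_matrix Phi M a)) = 1)"

definition analytic_at_zero :: "(real \<Rightarrow> real) \<Rightarrow> bool" where
  "analytic_at_zero f \<longleftrightarrow>
     (\<exists>c r. r > 0 \<and> (\<forall>e. 0 \<le> e \<and> e < r \<longrightarrow> (\<lambda>n. c n * e ^ n) sums f e))"

definition normally_parameterized ::
    "('b::finite \<Rightarrow> 'a) \<Rightarrow> (real \<Rightarrow> 'b \<Rightarrow> 'b \<Rightarrow> real) \<Rightarrow> bool" where
  "normally_parameterized Phi D \<longleftrightarrow>
     (\<forall>i j. analytic_at_zero (\<lambda>e. D e i j)) \<and>
     (\<forall>e>0. nonneg_matrix (D e) \<and> irreducible_matrix (D e)) \<and>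
     weak_black_hole Phi (D 0)"

text \<open>Stationary distribution (unique for irreducible stochastic matrices).\<close>
definition stationary_dist :: "('b::finite \<Rightarrow> 'b \<Rightarrow> real) \<Rightarrow> ('b \<Rightarrow> real) \<Rightarrow> bool" where
  "stationary_dist M p \<longleftrightarrow> (\<forall>i. p i \<ge> 0) \<and> (\<Sum>i\<in>UNIV. p i) = 1 \<and>
     (\<forall>j. (\<Sum>i\<in>UNIV. p i * M i j) = p j)"

definition stat :: "('b::finite \<Rightarrow> 'b \<Rightarrow> real) \<Rightarrow> 'b \<Rightarrow> real" where
  "stat M = (THE p. stationary_dist M p)"

fun path_prob :: "('b::finite \<Rightarrow> 'a) \<Rightarrow> ('b \<Rightarrow> 'b \<Rightarrow> real) \<Rightarrow> 'b \<Rightarrow> 'a list \<Rightarrow> real" where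
  "path_prob Phi M y [] = 1"
| "path_prob Phi M y (a # w) = (\<Sum>y'\<in>{y'. Phi y' = a}. M y y' * path_prob Phi M y' w)"

text \<open>Stationary probability P(Z_s..Z_{s+L-1} = w) of a word w (in time order) for the
  hidden Markov process Z = Phi(Y), Y stationary with transition matrix M.\<close>
fun word_prob :: "('b::finite \<Rightarrow> 'a) \<Rightarrow> ('b \<Rightarrow> 'b \<Rightarrow> real) \<Rightarrow> 'a list \<Rightarrow> real" where
  "word_prob Phi M [] = 1"
| "word_prob Phi M (a # w) = (\<Sum>y\<in>{y. Phi y = a}. stat M y * path_prob Phi M y w)"

text \<open>Conditional probability p(u | v) where v is the past immediately preceding u
  (both in time order), as a function of eps.\<close>
definition cond_prob :: "('b::finite \<Rightarrow> 'a) \<Rightarrow> (real \<Rightarrow> 'b \<Rightarrow> 'b \<Rightarrow> real)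
    \<Rightarrow> 'a list \<Rightarrow> 'a list \<Rightarrow> real \<Rightarrow> real" where
  "cond_prob Phi D u v e = word_prob Phi (D e) (v @ u) / word_prob Phi (D e) v"

text \<open>Taylor coefficients at 0 of a function analytic at 0 (only its values for
  eps > 0 matter), and the order ord(f) (infinity for the zero series).\<close>
definition taylor_coeffs :: "(real \<Rightarrow> real) \<Rightarrow> nat \<Rightarrow> real" where
  "taylor_coeffs f = (THE c. \<exists>r>0. \<forall>e. 0 < e \<and> e < r \<longrightarrow> (\<lambda>n. c n * e ^ n) sums f e)"

definition ord0 :: "(real \<Rightarrow> real) \<Rightarrow> enat" where
  "ord0 f = (if \<forall>n. taylor_coeffs f n = 0 then \<infinity>
             else enat (LEAST n. taylor_coeffs f n \<noteq> 0))"

text \<open>b_j(z_{-m}^0): coefficient of eps^j in p(z_0 | z_{-m}^{-1}); the word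
  z_{-m}^0 is the list z with z!0 = z_{-m}, ..., last z = z_0.\<close>
definition bcoeff :: "('b::finite \<Rightarrow> 'a) \<Rightarrow> (real \<Rightarrow> 'b \<Rightarrow> 'b \<Rightarrow> real) \<Rightarrow> nat \<Rightarrow> 'a list \<Rightarrow> real" where
  "bcoeff Phi D j z = taylor_coeffs (cond_prob Phi D [last z] (butlast z)) j"

end

theory Submission
  imports Defs
begin


definition rep :: "(real \<Rightarrow> real) \<Rightarrow> real fps \<Rightarrow> bool" where
  "rep f F \<longleftrightarrow> fps_conv_radius F > 0 \<and> eventually (\<lambda>e. f e = eval_fps F e) (at_right 0)"

lemma ev_radius:
  assumes "fps_conv_radius (F::real fps) > 0"
  shows "eventually (\<lambda>e::real. ereal \<bar>e\<bar> < fps_conv_radius F) (at_right 0)"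
proof -
  have "eventually (\<lambda>e. e \<in> eball 0 (fps_conv_radius F)) (nhds (0::real))"
    using assms by (intro eventually_nhds_in_open) (auto simp: zero_ereal_def)
  hence "eventually (\<lambda>e. e \<in> eball 0 (fps_conv_radius F)) (at_right (0::real))"
    by (rule filter_leD[OF at_within_le_nhds])
  thus ?thesis by eventually_elim (auto simp: dist_norm)
qed

lemma rep_cong: "rep f F \<Longrightarrow> eventually (\<lambda>e. f e = g e) (at_right 0) \<Longrightarrow> rep g F"
  unfolding rep_def by (auto elim: eventually_elim2)

lemma rep_const: "rep (\<lambda>_. c) (fps_const c)"
  unfolding rep_def by auto

lemma rep_add: "rep f F \<Longrightarrow> rep g G \<Longrightarrow> rep (\<lambda>e. f e + g e) (F + G)"
  unfolding rep_def
proof (intro conjI, goal_cases)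
  case 1 thus ?case using fps_conv_radius_add[of F G] by (auto simp: min_def split: if_splits)
next
  case 2
  from 2 have "eventually (\<lambda>e::real. ereal \<bar>e\<bar> < fps_conv_radius F) (at_right 0)"
     "eventually (\<lambda>e::real. ereal \<bar>e\<bar> < fps_conv_radius G) (at_right 0)"
    by (auto intro: ev_radius)
  moreover from 2 have "eventually (\<lambda>e. f e = eval_fps F e) (at_right 0)" "eventually (\<lambda>e. g e = eval_fps G e) (at_right 0)" by auto
  ultimately show ?case by eventually_elim (auto simp: eval_fps_add)
qed

lemma rep_mult: "rep f F \<Longrightarrow> rep g G \<Longrightarrow> rep (\<lambda>e. f e * g e) (F * G)"
  unfolding rep_def
proof (intro conjI, goal_cases)
  case 1 thus ?case using fps_conv_radius_mult[of F G] by (auto simp: min_def split: if_splits)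
next
  case 2
  from 2 have "eventually (\<lambda>e::real. ereal \<bar>e\<bar> < fps_conv_radius F) (at_right 0)"
     "eventually (\<lambda>e::real. ereal \<bar>e\<bar> < fps_conv_radius G) (at_right 0)"
    by (auto intro: ev_radius)
  moreover from 2 have "eventually (\<lambda>e. f e = eval_fps F e) (at_right 0)" "eventually (\<lambda>e. g e = eval_fps G e) (at_right 0)" by auto
  ultimately show ?case by eventually_elim (auto simp: eval_fps_mult)
qed

lemma rep_minus: "rep f F \<Longrightarrow> rep (\<lambda>e. - f e) (- F)"
  unfolding rep_def
proof (intro conjI, goal_cases)
  case 1 thus ?case by simp
next
  case 2
  from 2 have "eventually (\<lambda>e::real. ereal \<bar>e\<bar> < fps_conv_radius F) (at_right 0)"
    by (auto intro: ev_radius)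
  moreover from 2 have "eventually (\<lambda>e. f e = eval_fps F e) (at_right 0)" by auto
  ultimately show ?case by eventually_elim (auto simp: eval_fps_minus)
qed

lemma rep_diff: "rep f F \<Longrightarrow> rep g G \<Longrightarrow> rep (\<lambda>e. f e - g e) (F - G)"
  using rep_add[of f F "\<lambda>e. - g e" "-G"] rep_minus[of g G] by simp

lemma rep_sum: "(\<And>x. x \<in> A \<Longrightarrow> rep (f x) (F x)) \<Longrightarrow> rep (\<lambda>e. \<Sum>x\<in>A. f x e) (\<Sum>x\<in>A. F x)"
proof (induction A rule: infinite_finite_induct)
  case (infinite A) thus ?case using rep_const[of 0] by simp
next
  case empty thus ?case using rep_const[of 0] by simp
next
  case (insert x A) thus ?case using rep_add[of "f x" "F x"] by simp
qed

lemma rep_prod: "(\<And>x. x \<in> A \<Longrightarrow> rep (f x) (F x)) \<Longrightarrow> rep (\<lambda>e. \<Prod>x\<in>A. f x e) (\<Prod>x\<in>A. F x)"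
proof (induction A rule: infinite_finite_induct)
  case (infinite A) thus ?case using rep_const[of 1] by simp
next
  case empty thus ?case using rep_const[of 1] by simp
next
  case (insert x A) thus ?case using rep_mult[of "f x" "F x"] by simp
qed

lemma lead_limit:
  assumes "rep f F" "F \<noteq> 0"
  shows "((\<lambda>e. f e / e ^ subdegree F) \<longlongrightarrow> fps_nth F (subdegree F)) (at_right 0)"
proof -
  let ?d = "subdegree F" let ?S = "fps_shift ?d F"
  have r: "fps_conv_radius ?S > 0" using assms unfolding rep_def by simp
  have "isCont (eval_fps ?S) 0"
    using r by (intro continuous_eval_fps) (auto simp: zero_ereal_def)
  hence "(eval_fps ?S \<longlongrightarrow> eval_fps ?S 0) (at_right 0)"
    by (simp add: isCont_def filterlim_at_split)
  hence t: "(eval_fps ?S \<longlongrightarrow> fps_nth F ?d) (at_right 0)" by (simp add: eval_fps_at_0)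
  have "eventually (\<lambda>e::real. ereal \<bar>e\<bar> < fps_conv_radius F) (at_right 0)"
    using assms unfolding rep_def by (auto intro: ev_radius)
  moreover have "eventually (\<lambda>e. f e = eval_fps F e) (at_right 0)" using assms unfolding rep_def by auto
  moreover have "eventually (\<lambda>e::real. e > 0) (at_right 0)" by (simp add: eventually_at_right_less)
  ultimately have "eventually (\<lambda>e. eval_fps ?S e = f e / e ^ ?d) (at_right 0)"
    by eventually_elim (auto simp: eval_fps_shift)
  from tendsto_cong[OF this] t show ?thesis by simp
qed

lemma rep_unique: assumes "rep f F" "rep f G" shows "F = G"
proof (rule ccontr)
  assume ne: "F \<noteq> G"
  have "rep (\<lambda>e. f e - f e) (F - G)" by (rule rep_diff[OF assms])
  hence r: "rep (\<lambda>e. 0) (F - G)" by simp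
  have "F - G \<noteq> 0" using ne by simp
  from lead_limit[OF r this] have "((\<lambda>e. 0) \<longlongrightarrow> fps_nth (F-G) (subdegree (F-G))) (at_right (0::real))"
    by simp
  hence "fps_nth (F-G) (subdegree (F-G)) = 0"
    using tendsto_unique[OF trivial_limit_at_right_real] tendsto_const by metis
  with \<open>F - G \<noteq> 0\<close> show False using nth_subdegree_zero_iff by blast
qed

lemma ev_pos: "eventually (\<lambda>e::real. e > 0) (at_right 0)"
  by (simp add: eventually_at_right_less)

lemma rep_lead_pos:
  assumes "rep f F" "F \<noteq> 0" "eventually (\<lambda>e. f e \<ge> 0) (at_right 0)"
  shows "fps_nth F (subdegree F) > 0"
proof -
  have "eventually (\<lambda>e. f e / e ^ subdegree F \<ge> 0) (at_right 0)"
    using assms(3) ev_pos by eventually_elim auto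
  hence "fps_nth F (subdegree F) \<ge> 0"
    using tendsto_lowerbound[OF lead_limit[OF assms(1,2)]] by (simp add: trivial_limit_at_right_real)
  thus ?thesis by (metis less_eq_real_def nth_subdegree_zero_iff assms(2))
qed

definition low :: "nat \<Rightarrow> real fps \<Rightarrow> bool" where
  "low s f \<longleftrightarrow> (\<forall>i<s. fps_nth f i = 0)"

lemma rep_compare:
  assumes "rep g G" "rep h H" "H \<noteq> 0" "eventually (\<lambda>e. \<bar>g e\<bar> \<le> \<bar>h e\<bar>) (at_right 0)"
  shows "low (subdegree H) G"
proof (cases "G = 0")
  case True thus ?thesis by (simp add: low_def)
next
  case False
  let ?dg = "subdegree G" let ?dh = "subdegree H"
  have "?dh \<le> ?dg"
  proof (rule ccontr)
    assume "\<not> ?dh \<le> ?dg"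
    hence lt: "?dg < ?dh" by simp
    have lg: "((\<lambda>e. g e / e ^ ?dg) \<longlongrightarrow> fps_nth G ?dg) (at_right 0)" by (rule lead_limit[OF assms(1) False])
    have lh: "((\<lambda>e. h e / e ^ ?dh) \<longlongrightarrow> fps_nth H ?dh) (at_right 0)" by (rule lead_limit[OF assms(2,3)])
    have "((\<lambda>e::real. e ^ (?dh - ?dg)) \<longlongrightarrow> 0 ^ (?dh - ?dg)) (at_right 0)"
      by (intro tendsto_intros)
    hence "((\<lambda>e::real. e ^ (?dh - ?dg)) \<longlongrightarrow> 0) (at_right 0)" using lt by simp
    from tendsto_mult[OF this lh]
    have l2: "((\<lambda>e. e ^ (?dh - ?dg) * (h e / e ^ ?dh)) \<longlongrightarrow> 0) (at_right 0)" by simp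
    have "eventually (\<lambda>e. e ^ (?dh - ?dg) * (h e / e ^ ?dh) = h e / e ^ ?dg) (at_right 0)"
      using ev_pos
    proof eventually_elim
      case (elim e)
      have "e ^ ?dh = e ^ (?dh - ?dg) * e ^ ?dg" using lt by (simp add: power_add[symmetric])
      thus ?case using elim by (simp add: field_simps)
    qed
    from tendsto_cong[OF this] l2 have l3: "((\<lambda>e. h e / e ^ ?dg) \<longlongrightarrow> 0) (at_right 0)" by simp
    have "eventually (\<lambda>e. \<bar>g e / e ^ ?dg\<bar> \<le> \<bar>h e / e ^ ?dg\<bar>) (at_right 0)"
      using assms(4) ev_pos by eventually_elim (simp add: abs_divide divide_right_mono)
    from tendsto_le[OF trivial_limit_at_right_real tendsto_rabs[OF l3] tendsto_rabs[OF lg] this]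
    have "\<bar>fps_nth G ?dg\<bar> \<le> 0" by simp
    thus False using False by simp
  qed
  thus ?thesis unfolding low_def using nth_less_subdegree_zero by (metis order.strict_trans2)
qed

lemma rep_ratio:
  assumes "rep g G" "rep h H" "eventually (\<lambda>e. \<bar>g e\<bar> \<le> \<bar>h e\<bar>) (at_right 0)"
  shows "\<exists>F. rep (\<lambda>e. g e / h e) F"
proof (cases "H = 0")
  case True
  have "eventually (\<lambda>e. h e = 0) (at_right 0)" using assms(2) True unfolding rep_def by simp
  hence "eventually (\<lambda>e. g e = 0) (at_right 0)" using assms(3) by eventually_elim simp
  hence "eventually (\<lambda>e. 0 = g e / h e) (at_right 0)" by eventually_elim simp
  hence "rep (\<lambda>e. g e / h e) 0" using rep_cong[OF rep_const[of 0]] by simp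
  thus ?thesis by blast
next
  case False
  note lw = rep_compare[OF assms(1,2) False assms(3)]
  show ?thesis
  proof (cases "G = 0")
    case True
    have "eventually (\<lambda>e. g e = 0) (at_right 0)" using assms(1) True unfolding rep_def by simp
    hence "eventually (\<lambda>e. 0 = g e / h e) (at_right 0)" by eventually_elim simp
  hence "rep (\<lambda>e. g e / h e) 0" using rep_cong[OF rep_const[of 0]] by simp
    thus ?thesis by blast
  next
    case Gnz: False
    let ?d = "subdegree H"
    have dle: "?d \<le> subdegree G" using lw Gnz unfolding low_def
      by (meson not_le nth_subdegree_zero_iff)
    define G' where "G' = fps_shift ?d G"
    define H' where "H' = fps_shift ?d H"
    have H0: "fps_nth H' 0 \<noteq> 0" using False by (simp add: H'_def)
    have rG: "fps_conv_radius G' > 0" using assms(1) by (simp add: G'_def rep_def)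
    have rH: "fps_conv_radius H' > 0" using assms(2) by (simp add: H'_def rep_def)
    have rI: "fps_conv_radius (inverse H') > 0" by (rule fps_conv_radius_inverse_pos[OF H0 rH])
    have rF: "fps_conv_radius (G' * inverse H') > 0"
      using fps_conv_radius_mult[of G' "inverse H'"] rG rI by (auto simp: min_def split: if_splits)
    have "eventually (\<lambda>e. g e / h e = eval_fps (G' * inverse H') e) (at_right 0)"
      using ev_pos ev_radius[OF rG] ev_radius[OF rI] ev_radius[OF rH]
        assms(1,2)[unfolded rep_def, THEN conjunct2]
        ev_radius[OF assms(1)[unfolded rep_def, THEN conjunct1]] ev_radius[OF assms(2)[unfolded rep_def, THEN conjunct1]]
    proof eventually_elim
      case (elim e)
      have eg: "eval_fps G' e = g e / e ^ ?d" using elim dle by (simp add: G'_def eval_fps_shift)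
      have eh: "eval_fps H' e = h e / e ^ ?d" using elim by (simp add: H'_def eval_fps_shift)
      have "eval_fps (inverse H' * H') e = eval_fps (inverse H') e * eval_fps H' e"
        using elim by (intro eval_fps_mult) auto
      also have "inverse H' * H' = 1" using H0 by (simp add: inverse_mult_eq_1)
      finally have inv: "eval_fps (inverse H') e = inverse (eval_fps H' e)"
        by (metis eval_fps_1 inverse_unique mult.commute)
      have "eval_fps (G' * inverse H') e = eval_fps G' e * eval_fps (inverse H') e"
        using elim by (intro eval_fps_mult) auto
      also have "\<dots> = (g e / e ^ ?d) / (h e / e ^ ?d)" by (simp add: eg inv eh divide_inverse)
      also have "\<dots> = g e / h e" using elim by (simp add: field_simps)
      finally show ?case by simp
    qed
    hence "rep (\<lambda>e. g e / h e) (G' * inverse H')" using rF by (simp add: rep_def)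
    thus ?thesis by blast
  qed
qed

lemma taylor_rep: assumes "rep f F" shows "taylor_coeffs f = fps_nth F"
  unfolding taylor_coeffs_def
proof (rule the_equality)
  have r: "fps_conv_radius F > 0" using assms by (simp add: rep_def)
  have "eventually (\<lambda>e. f e = eval_fps F e \<and> ereal \<bar>e\<bar> < fps_conv_radius F) (at_right 0)"
    using assms ev_radius[OF r] by (auto simp: rep_def intro: eventually_conj)
  then obtain b where b: "b > 0" "\<And>e. 0 < e \<Longrightarrow> e < b \<Longrightarrow> f e = eval_fps F e \<and> ereal \<bar>e\<bar> < fps_conv_radius F"
    unfolding eventually_at_right_field by auto
  show "\<exists>r>0. \<forall>e. 0 < e \<and> e < r \<longrightarrow> (\<lambda>n. fps_nth F n * e ^ n) sums f e"
  proof (intro exI[of _ b] conjI allI impI)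
    fix e :: real assume "0 < e \<and> e < b"
    hence "f e = eval_fps F e" "ereal \<bar>e\<bar> < fps_conv_radius F" using b(2) by auto
    thus "(\<lambda>n. fps_nth F n * e ^ n) sums f e" using sums_eval_fps[of e F] by simp
  qed (use b in auto)
next
  fix c assume "\<exists>r>0. \<forall>e. 0 < e \<and> e < r \<longrightarrow> (\<lambda>n. c n * e ^ n) sums f e"
  then obtain r where r: "r > 0" "\<And>e. 0 < e \<Longrightarrow> e < r \<Longrightarrow> (\<lambda>n. c n * e ^ n) sums f e" by auto
  define C where "C = Abs_fps c"
  have "summable (\<lambda>n. c n * (r/2) ^ n)" using r(2)[of "r/2"] r(1) by (auto simp: sums_iff)
  hence "conv_radius c \<ge> norm (r/2)" by (rule conv_radius_geI)
  moreover have "ereal 0 < ereal (r/2)" using r(1) by simp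
  ultimately have "ereal 0 < conv_radius c" using r(1) by (metis abs_of_pos half_gt_zero order.strict_trans2 real_norm_def)
  hence rC: "fps_conv_radius C > 0" unfolding C_def fps_conv_radius_def
    by (simp add: zero_ereal_def)
  have "eventually (\<lambda>e. f e = eval_fps C e) (at_right 0)"
  proof (rule eventually_at_rightI[of 0 r])
    fix e :: real assume "e \<in> {0<..<r}"
    hence "(\<lambda>n. c n * e ^ n) sums f e" using r by auto
    thus "f e = eval_fps C e" by (simp add: C_def eval_fps_def sums_iff)
  qed (use r in auto)
  hence "rep f C" using rC by (simp add: rep_def)
  from rep_unique[OF this assms] have "C = F" .
  thus "c = fps_nth F" unfolding C_def by auto
qed

lemma ord0_rep: assumes "rep f F" "ord0 f \<le> enat k" shows "F \<noteq> 0 \<and> subdegree F \<le> k"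
proof -
  have tc: "taylor_coeffs f = fps_nth F" by (rule taylor_rep[OF assms(1)])
  have nz: "F \<noteq> 0"
  proof
    assume "F = 0" thus False using assms(2) by (simp add: ord0_def tc)
  qed
  have "(LEAST n. fps_nth F n \<noteq> 0) = subdegree F"
    by (rule Least_equality) (use nz in \<open>auto intro: subdegree_leI\<close>)
  thus ?thesis using assms(2) nz by (auto simp: ord0_def tc split: if_splits)
qed

lemma low_0[simp]: "low 0 f" by (simp add: low_def)
lemma low_zero[simp]: "low s 0" by (simp add: low_def)
lemma low_add: "low s f \<Longrightarrow> low s g \<Longrightarrow> low s (f + g)" by (simp add: low_def)
lemma low_diff: "low s f \<Longrightarrow> low s g \<Longrightarrow> low s (f - g)" by (simp add: low_def)
lemma low_uminus: "low s f \<Longrightarrow> low s (- f)" by (simp add: low_def)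
lemma low_sum: "(\<And>x. x \<in> A \<Longrightarrow> low s (f x)) \<Longrightarrow> low s (\<Sum>x\<in>A. f x)"
  by (simp add: low_def fps_sum_nth)
lemma low_mono: "t \<le> s \<Longrightarrow> low s f \<Longrightarrow> low t f" by (simp add: low_def)
lemma low_mult: assumes "low s f" "low t g" shows "low (s + t) (f * g)"
  unfolding low_def
proof (intro allI impI)
  fix n assume n: "n < s + t"
  have "fps_nth (f * g) n = (\<Sum>i=0..n. fps_nth f i * fps_nth g (n - i))" by (simp add: fps_mult_nth)
  also have "\<dots> = 0"
  proof (intro sum.neutral ballI)
    fix i assume "i \<in> {0..n}"
    show "fps_nth f i * fps_nth g (n - i) = 0"
    proof (cases "i < s")
      case True thus ?thesis using assms(1) by (simp add: low_def)
    next
      case False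
      have "i \<le> n" using \<open>i \<in> {0..n}\<close> by simp
      hence "n - i < t" using n False by linarith
      thus ?thesis using assms(2) by (simp add: low_def)
    qed
  qed
  finally show "fps_nth (f * g) n = 0" .
qed
lemma low_subdeg: "f \<noteq> 0 \<Longrightarrow> low s f \<Longrightarrow> s \<le> subdegree f"
  unfolding low_def by (meson not_le nth_subdegree_zero_iff)
lemma low_two: "low s (f + f) \<Longrightarrow> low s f" by (simp add: low_def)

fun ppg :: "('b::finite \<Rightarrow> 'a) \<Rightarrow> ('b \<Rightarrow> 'b \<Rightarrow> 'r::comm_ring_1) \<Rightarrow> 'a list \<Rightarrow> ('b \<Rightarrow> 'r) \<Rightarrow> 'b \<Rightarrow> 'r" where
  "ppg Phi M [] c y = c y"
| "ppg Phi M (a # u) c y = (\<Sum>k\<in>{k. Phi k = a}. M y k * ppg Phi M u c k)"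

fun Tg :: "('b::finite \<Rightarrow> 'a) \<Rightarrow> ('b \<Rightarrow> 'b \<Rightarrow> 'r::comm_ring_1) \<Rightarrow> 'a list \<Rightarrow> 'b \<Rightarrow> 'b \<Rightarrow> 'r" where
  "Tg Phi M [] x y = (if x = y then 1 else 0)"
| "Tg Phi M (a # v) x y = (\<Sum>k\<in>{k. Phi k = a}. M x k * Tg Phi M v k y)"

lemma ppg_append: "ppg Phi M (u @ w) c y = ppg Phi M u (ppg Phi M w c) y"
  by (induction u arbitrary: y) auto

lemma ppg_T: "ppg Phi M v c x = (\<Sum>y\<in>UNIV. Tg Phi M v x y * c y)"
proof (induction v arbitrary: x)
  case Nil
  have "(\<Sum>y\<in>UNIV. Tg Phi M [] x y * c y) = (\<Sum>y\<in>UNIV. if x = y then c y else 0)"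
    by (rule sum.cong) auto
  thus ?case by simp
next
  case (Cons a v)
  have "ppg Phi M (a # v) c x = (\<Sum>k\<in>{k. Phi k = a}. M x k * (\<Sum>y\<in>UNIV. Tg Phi M v k y * c y))"
    using Cons by simp
  also have "\<dots> = (\<Sum>k\<in>{k. Phi k = a}. \<Sum>y\<in>UNIV. M x k * Tg Phi M v k y * c y)"
    by (simp add: sum_distrib_left mult.assoc)
  also have "\<dots> = (\<Sum>y\<in>UNIV. \<Sum>k\<in>{k. Phi k = a}. M x k * Tg Phi M v k y * c y)"
    by (rule sum.swap)
  also have "\<dots> = (\<Sum>y\<in>UNIV. Tg Phi M (a # v) x y * c y)"
    by (simp add: sum_distrib_right)
  finally show ?case .
qed

lemma path_prob_ppg: "path_prob Phi M y w = ppg Phi M w (\<lambda>_. 1) y"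
  by (induction w arbitrary: y) auto

lemma aux_comb: "(x::'a::ab_group_add) = a \<Longrightarrow> - x = b \<Longrightarrow> x + x = a - b" by auto

lemma minor_step:
  fixes M :: "'b::finite \<Rightarrow> 'b \<Rightarrow> real fps" and U V :: "'b \<Rightarrow> real fps"
  assumes mn: "\<And>i j k l. Phi k = a \<Longrightarrow> Phi l = a \<Longrightarrow> low 1 (M i k * M j l - M i l * M j k)"
    and ih: "\<And>k l. low n (U k * V l - U l * V k)"
  shows "low (Suc n) ((\<Sum>k\<in>{k. Phi k = a}. M i k * U k) * (\<Sum>k\<in>{k. Phi k = a}. M j k * V k)
     - (\<Sum>k\<in>{k. Phi k = a}. M j k * U k) * (\<Sum>k\<in>{k. Phi k = a}. M i k * V k))" (is "low _ ?S")
proof -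
  let ?B = "{k. Phi k = a}"
  define A where "A k l = U k * V l - U l * V k" for k l
  have S1: "?S = (\<Sum>k\<in>?B. \<Sum>l\<in>?B. M i k * M j l * A k l)"
  proof -
    have "(\<Sum>k\<in>?B. \<Sum>l\<in>?B. M i k * M j l * A k l)
        = (\<Sum>k\<in>?B. \<Sum>l\<in>?B. (M i k * U k) * (M j l * V l)) - (\<Sum>k\<in>?B. \<Sum>l\<in>?B. (M j l * U l) * (M i k * V k))"
      by (simp add: A_def sum_subtractf[symmetric] algebra_simps)
    also have "(\<Sum>k\<in>?B. \<Sum>l\<in>?B. (M j l * U l) * (M i k * V k)) = (\<Sum>l\<in>?B. \<Sum>k\<in>?B. (M j l * U l) * (M i k * V k))"
      by (rule sum.swap)
    finally show ?thesis by (simp add: sum_product)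
  qed
  have S2: "- ?S = (\<Sum>k\<in>?B. \<Sum>l\<in>?B. M i l * M j k * A k l)"
  proof -
    have "(\<Sum>k\<in>?B. \<Sum>l\<in>?B. M i l * M j k * A k l)
        = (\<Sum>k\<in>?B. \<Sum>l\<in>?B. (M j k * U k) * (M i l * V l)) - (\<Sum>k\<in>?B. \<Sum>l\<in>?B. (M i l * U l) * (M j k * V k))"
      by (simp add: A_def sum_subtractf[symmetric] algebra_simps)
    also have "(\<Sum>k\<in>?B. \<Sum>l\<in>?B. (M i l * U l) * (M j k * V k)) = (\<Sum>l\<in>?B. \<Sum>k\<in>?B. (M i l * U l) * (M j k * V k))"
      by (rule sum.swap)
    finally show ?thesis by (simp add: sum_product)
  qed
  have "?S + ?S = (\<Sum>k\<in>?B. \<Sum>l\<in>?B. M i k * M j l * A k l) - (\<Sum>k\<in>?B. \<Sum>l\<in>?B. M i l * M j k * A k l)"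
    by (rule aux_comb[OF S1 S2])
  also have "\<dots> = (\<Sum>k\<in>?B. \<Sum>l\<in>?B. (M i k * M j l - M i l * M j k) * A k l)"
    by (simp add: sum_subtractf[symmetric] algebra_simps)
  finally have eq: "?S + ?S = (\<Sum>k\<in>?B. \<Sum>l\<in>?B. (M i k * M j l - M i l * M j k) * A k l)" .
  have lx: "low (1 + n) (\<Sum>k\<in>?B. \<Sum>l\<in>?B. (M i k * M j l - M i l * M j k) * A k l)"
  proof (intro low_sum)
    fix k l assume "k \<in> ?B" "l \<in> ?B"
    hence m1: "low 1 (M i k * M j l - M i l * M j k)" by (intro mn) auto
    show "low (1 + n) ((M i k * M j l - M i l * M j k) * A k l)"
      by (rule low_mult[OF m1]) (simp add: ih A_def)
  qed
  have "low (Suc n) (?S + ?S)" unfolding eq using lx by simp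
  thus ?thesis by (rule low_two)
qed

lemma minor_lemma:
  fixes M :: "'b::finite \<Rightarrow> 'b \<Rightarrow> real fps"
  assumes mn: "\<And>a i j k l. Phi k = a \<Longrightarrow> Phi l = a \<Longrightarrow> low 1 (M i k * M j l - M i l * M j k)"
  shows "low (length u) (ppg Phi M u c i * ppg Phi M u d j - ppg Phi M u c j * ppg Phi M u d i)"
proof (induction u arbitrary: i j)
  case Nil thus ?case by simp
next
  case (Cons a u)
  have "low (Suc (length u)) ((\<Sum>k\<in>{k. Phi k = a}. M i k * ppg Phi M u c k) * (\<Sum>k\<in>{k. Phi k = a}. M j k * ppg Phi M u d k)
     - (\<Sum>k\<in>{k. Phi k = a}. M j k * ppg Phi M u c k) * (\<Sum>k\<in>{k. Phi k = a}. M i k * ppg Phi M u d k))"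
    by (rule minor_step[OF mn Cons.IH])
  thus ?case by (simp only: ppg.simps list.size Suc_eq_plus1 add_0)
qed



lemma mpow_nonneg: "nonneg_matrix P \<Longrightarrow> mpow P n i j \<ge> 0"
  by (induction n arbitrary: j) (auto simp: nonneg_matrix_def intro!: sum_nonneg)

lemma closed_reach:
  assumes nn: "nonneg_matrix P" and cl: "\<forall>i j. i \<in> S \<longrightarrow> P i j > 0 \<longrightarrow> j \<in> S"
  shows "mpow P n i j > 0 \<Longrightarrow> i \<in> S \<Longrightarrow> j \<in> S"
proof (induction n arbitrary: j)
  case 0 thus ?case by (simp split: if_splits)
next
  case (Suc n)
  have "\<exists>k. mpow P n i k * P k j > 0"
  proof (rule ccontr)
    assume "\<not> ?thesis"
    hence "(\<Sum>k\<in>UNIV. mpow P n i k * P k j) \<le> 0" by (intro sum_nonpos) (simp add: not_less)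
    thus False using Suc.prems by simp
  qed
  then obtain k where k: "mpow P n i k * P k j > 0" by blast
  have "mpow P n i k \<ge> 0" "P k j \<ge> 0" using nn mpow_nonneg[OF nn] by (auto simp: nonneg_matrix_def)
  hence "mpow P n i k > 0" "P k j > 0" using k by (auto simp: zero_less_mult_iff)
  thus ?case using Suc cl by blast
qed

lemma closed_all:
  assumes nn: "nonneg_matrix P" and irr: "irreducible_matrix P"
    and cl: "\<And>i j. i \<in> S \<Longrightarrow> P i j > 0 \<Longrightarrow> j \<in> S" and "i \<in> S"
  shows "j \<in> S"
proof -
  obtain n where "mpow P n i j > 0" using irr by (auto simp: irreducible_matrix_def)
  thus ?thesis using closed_reach[OF nn] cl assms(4) by blast
qed

lemma harmonic:
  fixes P :: "'b::finite \<Rightarrow> 'b \<Rightarrow> real"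
  assumes st: "stochastic P" and irr: "irreducible_matrix P"
    and h: "\<And>i. y i = (\<Sum>j\<in>UNIV. P i j * y j) - c"
  shows "c = 0 \<and> (\<forall>i j. y i = y j)"
proof -
  have nn: "nonneg_matrix P" using st by (simp add: stochastic_def nonneg_matrix_def)
  have P0: "\<And>i j. P i j \<ge> 0" and P1: "\<And>i. (\<Sum>j\<in>UNIV. P i j) = 1" using st by (auto simp: stochastic_def)
  define M where "M = Max (range y)"
  define m where "m = Min (range y)"
  have yM: "\<And>i. y i \<le> M" unfolding M_def by (simp add: Max_ge)
  have ym: "\<And>i. m \<le> y i" unfolding m_def by (simp add: Min_le)
  have "M \<in> range y" unfolding M_def by (rule Max_in) auto
  then obtain i0 where i0: "y i0 = M" by auto
  have "m \<in> range y" unfolding m_def by (rule Min_in) auto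
  then obtain i1 where i1: "y i1 = m" by auto
  have avgM: "\<And>i. (\<Sum>j\<in>UNIV. P i j * y j) \<le> M"
  proof -
    fix i
    have "(\<Sum>j\<in>UNIV. P i j * y j) \<le> (\<Sum>j\<in>UNIV. P i j * M)"
      by (intro sum_mono mult_left_mono) (auto simp: yM P0)
    also have "\<dots> = M" by (simp add: sum_distrib_right[symmetric] P1)
    finally show "(\<Sum>j\<in>UNIV. P i j * y j) \<le> M" .
  qed
  have avgm: "\<And>i. (\<Sum>j\<in>UNIV. P i j * y j) \<ge> m"
  proof -
    fix i
    have "(\<Sum>j\<in>UNIV. P i j * y j) \<ge> (\<Sum>j\<in>UNIV. P i j * m)"
      by (intro sum_mono mult_left_mono) (auto simp: ym P0)
    moreover have "(\<Sum>j\<in>UNIV. P i j * m) = m" by (simp add: sum_distrib_right[symmetric] P1)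
    ultimately show "(\<Sum>j\<in>UNIV. P i j * y j) \<ge> m" by simp
  qed
  have "c \<le> 0" using h[of i0] avgM[of i0] i0 by simp
  moreover have "c \<ge> 0" using h[of i1] avgm[of i1] i1 by simp
  ultimately have c0: "c = 0" by simp
  have cl: "j \<in> {i. y i = M}" if "i \<in> {i. y i = M}" "P i j > 0" for i j
  proof -
    have "(\<Sum>k\<in>UNIV. P i k * (M - y k)) = M - (\<Sum>k\<in>UNIV. P i k * y k)"
      by (simp add: right_diff_distrib sum_subtractf sum_distrib_right[symmetric] P1)
    also have "\<dots> = 0" using h[of i] c0 that(1) by simp
    finally have "(\<Sum>k\<in>UNIV. P i k * (M - y k)) = 0" .
    moreover have "\<forall>k\<in>UNIV. P i k * (M - y k) \<ge> 0" using P0 yM by simp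
    ultimately have "P i j * (M - y j) = 0" using sum_nonneg_eq_0_iff[of UNIV "\<lambda>k. P i k * (M - y k)"] by simp
    thus ?thesis using that(2) by simp
  qed
  have i0': "i0 \<in> {i. y i = M}" using i0 by simp
  have "\<And>j. y j = M" using closed_all[OF nn irr cl i0'] by simp
  thus ?thesis using c0 by simp
qed

lemma stat_nonneg:
  fixes P :: "'b::finite \<Rightarrow> 'b \<Rightarrow> real"
  assumes st: "stochastic P" and irr: "irreducible_matrix P"
    and fx: "\<And>j. (\<Sum>i\<in>UNIV. p i * P i j) = p j" and s1: "(\<Sum>i\<in>UNIV. p i) = 1"
  shows "p j \<ge> 0"
proof -
  have nn: "nonneg_matrix P" using st by (simp add: stochastic_def nonneg_matrix_def)
  have P0: "\<And>i j. P i j \<ge> 0" and P1: "\<And>i. (\<Sum>j\<in>UNIV. P i j) = 1" using st by (auto simp: stochastic_def)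
  define q where "q i = max (p i) 0" for i
  have q0: "\<And>i. q i \<ge> 0" by (simp add: q_def)
  have ge: "(\<Sum>i\<in>UNIV. q i * P i j) \<ge> q j" for j
  proof -
    have a: "(\<Sum>i\<in>UNIV. q i * P i j) \<ge> (\<Sum>i\<in>UNIV. p i * P i j)"
      by (intro sum_mono mult_right_mono) (auto simp: q_def P0)
    have b: "(\<Sum>i\<in>UNIV. q i * P i j) \<ge> 0" by (intro sum_nonneg) (simp add: q0 P0)
    show ?thesis using a b fx[of j] by (simp add: q_def)
  qed
  have "(\<Sum>j\<in>UNIV. (\<Sum>i\<in>UNIV. q i * P i j)) = (\<Sum>i\<in>UNIV. q i)"
    by (subst sum.swap) (simp add: sum_distrib_left[symmetric] P1)
  hence "(\<Sum>j\<in>UNIV. (\<Sum>i\<in>UNIV. q i * P i j) - q j) = 0" by (simp add: sum_subtractf)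
  hence eqq: "(\<Sum>i\<in>UNIV. q i * P i j) = q j" for j
    using sum_nonneg_eq_0_iff[of UNIV "\<lambda>j. (\<Sum>i\<in>UNIV. q i * P i j) - q j"] ge by simp
  have cl: "j \<in> {i. q i > 0}" if "i \<in> {i. q i > 0}" "P i j > 0" for i j
  proof -
    have "q i * P i j \<le> (\<Sum>i\<in>UNIV. q i * P i j)"
      by (rule member_le_sum) (auto simp: q0 P0)
    moreover have "q i * P i j > 0" using that by simp
    ultimately show ?thesis using eqq[of j] by simp
  qed
  obtain i0 where "p i0 > 0"
  proof (rule ccontr)
    assume "\<not> thesis"
    hence "\<forall>i. p i \<le> 0" using that by (meson not_le)
    hence "(\<Sum>i\<in>UNIV. p i) \<le> 0" by (simp add: sum_nonpos)
    thus False using s1 by simp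
  qed
  hence "i0 \<in> {i. q i > 0}" by (simp add: q_def)
  from closed_all[OF nn irr cl this] have "q j > 0" by simp
  thus ?thesis by (simp add: q_def)
qed

definition NtG :: "('b::finite \<Rightarrow> 'b \<Rightarrow> 'r::comm_ring_1) \<Rightarrow> 'b \<Rightarrow> 'r^'b^'b" where
  "NtG M b0 = (\<chi> j i. if j = b0 then 1 else (if i = j then 1 else 0) - M i j)"

definition bvec :: "'b::finite \<Rightarrow> 'r::comm_ring_1^'b" where
  "bvec b0 = (\<chi> j. if j = b0 then 1 else 0)"

definition CkG :: "('b::finite \<Rightarrow> 'b \<Rightarrow> 'r::comm_ring_1) \<Rightarrow> 'b \<Rightarrow> 'b \<Rightarrow> 'r^'b^'b" where
  "CkG M b0 k = (\<chi> i j. if j = k then bvec b0 $ i else NtG M b0 $ i $ j)"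

lemma NtG_mult: "(NtG M b0 *v x) $ j = (if j = b0 then (\<Sum>i\<in>UNIV. x $ i) else x $ j - (\<Sum>i\<in>UNIV. M i j * x $ i))"
proof (cases "j = b0")
  case True thus ?thesis by (simp add: NtG_def matrix_vector_mult_def)
next
  case False
  have "(NtG M b0 *v x) $ j = (\<Sum>i\<in>UNIV. ((if i = j then 1 else 0) - M i j) * x $ i)"
    using False by (simp add: NtG_def matrix_vector_mult_def)
  also have "\<dots> = (\<Sum>i\<in>UNIV. (if i = j then x $ i else 0) - M i j * x $ i)"
    by (rule sum.cong) (auto simp: algebra_simps)
  finally show ?thesis using False by (simp add: sum_subtractf)
qed

lemma NtG_det_nz:
  fixes P :: "'b::finite \<Rightarrow> 'b \<Rightarrow> real"
  assumes st: "stochastic P" and irr: "irreducible_matrix P"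
  shows "det (NtG P b0) \<noteq> 0"
proof -
  let ?A = "transpose (NtG P b0)"
  have ker: "x = 0" if x: "?A *v x = 0" for x
  proof -
    define y where "y j = (if j = b0 then 0 else x $ j)" for j
    have eq: "y i = (\<Sum>j\<in>UNIV. P i j * y j) - x $ b0" for i
    proof -
      have "0 = (?A *v x) $ i" using x by simp
      also have "\<dots> = (\<Sum>j\<in>UNIV. (if j = b0 then x $ j else 0) + ((if i = j then 1 else 0) - P i j) * y j)"
        unfolding matrix_vector_mult_def transpose_def NtG_def
        by (simp, intro sum.cong refl) (auto simp: y_def)
      also have "\<dots> = (\<Sum>j\<in>UNIV. (if j = b0 then x $ j else 0)) + (\<Sum>j\<in>UNIV. (if i = j then y j else 0) - P i j * y j)"
        unfolding sum.distrib[symmetric] by (rule sum.cong) (auto simp: algebra_simps)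
      also have "\<dots> = x $ b0 + (\<Sum>j\<in>UNIV. (if i = j then y j else 0)) - (\<Sum>j\<in>UNIV. P i j * y j)"
        by (simp add: sum_subtractf)
      also have "\<dots> = x $ b0 + y i - (\<Sum>j\<in>UNIV. P i j * y j)" by simp
      finally show ?thesis by simp
    qed
    from harmonic[OF st irr eq] have c0: "x $ b0 = 0" and yc: "\<And>i j. y i = y j" by auto
    have y0: "y i = 0" for i using yc[of i b0] by (simp add: y_def)
    have "x $ i = 0" for i
    proof (cases "i = b0")
      case True with c0 show ?thesis by simp
    next
      case False hence "y i = x $ i" by (simp add: y_def)
      with y0[of i] show ?thesis by simp
    qed
    thus ?thesis by (simp add: vec_eq_iff)
  qed
  have "invertible ?A"
    unfolding invertible_left_inverse using matrix_left_invertible_ker ker by blast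
  hence "det ?A \<noteq> 0" by (simp add: invertible_det_nz)
  thus ?thesis by simp
qed

lemma stat_cramer:
  fixes P :: "'b::finite \<Rightarrow> 'b \<Rightarrow> real"
  assumes st: "stochastic P" and irr: "irreducible_matrix P"
  shows "stationary_dist P (stat P) \<and> stat P k = det (CkG P b0 k) / det (NtG P b0)"
proof -
  let ?A = "NtG P b0"
  have d: "det ?A \<noteq> 0" by (rule NtG_det_nz[OF st irr])
  define \<pi> where "\<pi> = (\<chi> k. det (CkG P b0 k) / det ?A)"
  have cr: "?A *v x = bvec b0 \<longleftrightarrow> x = \<pi>" for x
    unfolding \<pi>_def CkG_def by (rule cramer[OF d])
  have P1: "\<And>i. (\<Sum>j\<in>UNIV. P i j) = 1" using st by (auto simp: stochastic_def)
  define p where "p k = \<pi> $ k" for k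
  have sol: "?A *v \<pi> = bvec b0" using cr by simp
  have s1: "(\<Sum>i\<in>UNIV. p i) = 1" using arg_cong[OF sol, of "\<lambda>v. v $ b0"]
    by (simp add: NtG_mult bvec_def p_def)
  have fx1: "(\<Sum>i\<in>UNIV. p i * P i j) = p j" if "j \<noteq> b0" for j
    using arg_cong[OF sol, of "\<lambda>v. v $ j"] that by (simp add: NtG_mult bvec_def p_def mult.commute)
  have fx: "(\<Sum>i\<in>UNIV. p i * P i j) = p j" for j
  proof (cases "j = b0")
    case False thus ?thesis by (rule fx1)
  next
    case True
    define f where "f j = p j - (\<Sum>i\<in>UNIV. p i * P i j)" for j
    have "(\<Sum>j\<in>UNIV. f j) = (\<Sum>j\<in>UNIV. p j) - (\<Sum>i\<in>UNIV. p i * (\<Sum>j\<in>UNIV. P i j))"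
    proof -
      have "(\<Sum>j\<in>UNIV. \<Sum>i\<in>UNIV. p i * P i j) = (\<Sum>i\<in>UNIV. \<Sum>j\<in>UNIV. p i * P i j)"
        by (rule sum.swap)
      thus ?thesis unfolding f_def by (simp add: sum_subtractf sum_distrib_left)
    qed
    also have "\<dots> = 0" by (simp add: P1)
    finally have S0: "(\<Sum>j\<in>UNIV. f j) = 0" .
    have "(\<Sum>j\<in>UNIV. f j) = (\<Sum>j\<in>UNIV. if j = b0 then f b0 else 0)"
      by (intro sum.cong refl) (auto simp: f_def fx1)
    hence "f b0 = 0" using S0 by simp
    thus ?thesis using True by (simp add: f_def)
  qed
  have nn: "p j \<ge> 0" for j by (rule stat_nonneg[OF st irr fx s1])
  have sd: "stationary_dist P p" unfolding stationary_dist_def using nn s1 fx by auto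
  have uniq: "q = p" if "stationary_dist P q" for q
  proof -
    have "?A *v (\<chi> i. q i) = bvec b0"
      using that by (auto simp: vec_eq_iff NtG_mult bvec_def stationary_dist_def mult.commute)
    hence "(\<chi> i. q i) = \<pi>" using cr by simp
    thus ?thesis by (auto simp: p_def vec_eq_iff)
  qed
  have "stat P = p" unfolding stat_def using sd uniq by (rule the_equality)
  thus ?thesis using sd by (simp add: p_def \<pi>_def)
qed



lemma analytic_rep:
  assumes "analytic_at_zero f"
  shows "\<exists>F. rep f F \<and> fps_nth F 0 = f 0"
proof -
  obtain c r where r: "r > 0" "\<And>e. 0 \<le> e \<Longrightarrow> e < r \<Longrightarrow> (\<lambda>n. c n * e ^ n) sums f e"
    using assms unfolding analytic_at_zero_def by blast
  define C where "C = Abs_fps c"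
  have "summable (\<lambda>n. c n * (r/2) ^ n)" using r(2)[of "r/2"] r(1) by (auto simp: sums_iff)
  hence "conv_radius c \<ge> norm (r/2)" by (rule conv_radius_geI)
  moreover have "ereal 0 < ereal (r/2)" using r(1) by simp
  ultimately have "ereal 0 < conv_radius c" using r(1) by (metis abs_of_pos half_gt_zero order.strict_trans2 real_norm_def)
  hence rC: "fps_conv_radius C > 0" unfolding C_def fps_conv_radius_def
    by (simp add: zero_ereal_def)
  have "eventually (\<lambda>e. f e = eval_fps C e) (at_right 0)"
  proof (rule eventually_at_rightI[of 0 r])
    fix e :: real assume "e \<in> {0<..<r}"
    hence "(\<lambda>n. c n * e ^ n) sums f e" using r by auto
    thus "f e = eval_fps C e" by (simp add: C_def eval_fps_def sums_iff)
  qed (use r in auto)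
  hence "rep f C" using rC by (simp add: rep_def)
  moreover have "fps_nth C 0 = f 0" using r(2)[of 0] r(1) by (simp add: C_def)
  ultimately show ?thesis by blast
qed

lemma black_hole_minor:
  fixes M :: "'b::finite \<Rightarrow> 'b \<Rightarrow> real"
  assumes wbh: "weak_black_hole Phi M" and k: "Phi k = a" and l: "Phi l = a"
  shows "M i k * M j l - M i l * M j k = 0"
proof (rule ccontr)
  assume ne: "M i k * M j l - M i l * M j k \<noteq> 0"
  let ?R = "to_vec_matrix (sub_matrix Phi M a)"
  have Rik: "?R $ r $ k = M r k" "?R $ r $ l = M r l" for r
    using k l by (auto simp: to_vec_matrix_def sub_matrix_def)
  have "\<not> (\<forall>i j. sub_matrix Phi M a i j = 0)"
  proof
    assume all0: "\<forall>i j. sub_matrix Phi M a i j = 0"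
    have "M i k = 0" "M i l = 0" using all0 k l unfolding sub_matrix_def by (metis)+
    with ne show False by simp
  qed
  hence rk: "rank ?R = 1" using wbh unfolding weak_black_hole_def by blast
  have nz: "?R $ j \<noteq> 0"
  proof
    assume "?R $ j = 0"
    hence "M j k = 0" "M j l = 0" using Rik[of j] by (auto simp: vec_eq_iff)
    thus False using ne by simp
  qed
  have nsp: "?R $ i \<notin> span {?R $ j}"
  proof
    assume "?R $ i \<in> span {?R $ j}"
    then obtain t where t: "?R $ i = t *\<^sub>R ?R $ j" by (auto simp: span_singleton)
    hence "?R $ i $ k = t * ?R $ j $ k" "?R $ i $ l = t * ?R $ j $ l" by simp_all
    hence "M i k = t * M j k" "M i l = t * M j l" using Rik by simp_all
    thus False using ne by (simp add: algebra_simps)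
  qed
  have dist: "?R $ i \<noteq> ?R $ j" using nsp span_base[of "?R $ j" "{?R $ j}"] by auto
  have ind: "independent {?R $ i, ?R $ j}"
    using nz nsp independent_empty by (intro independent_insertI) auto
  have "card {?R $ i, ?R $ j} \<le> dim (rows ?R)"
    by (rule independent_card_le_dim[OF _ ind]) (auto simp: rows_def row_def)
  hence "2 \<le> rank ?R" using dist by (simp add: row_rank_def)
  thus False using rk by simp
qed

lemma rep_ppg:
  assumes "\<And>i j. rep (\<lambda>e. M e i j) (MF i j)" "\<And>k. rep (\<lambda>e. c e k) (CF k)"
  shows "rep (\<lambda>e. ppg Phi (M e) u (c e) y) (ppg Phi MF u CF y)"
proof (induction u arbitrary: y)
  case Nil thus ?case using assms(2) by simp
next
  case (Cons a u) thus ?case by (simp, intro rep_sum rep_mult assms(1))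
qed

lemma rep_Tg:
  assumes "\<And>i j. rep (\<lambda>e. M e i j) (MF i j)"
  shows "rep (\<lambda>e. Tg Phi (M e) v x y) (Tg Phi MF v x y)"
proof (induction v arbitrary: x)
  case Nil thus ?case using rep_const[of 1] rep_const[of 0] by simp
next
  case (Cons a v) thus ?case by (simp, intro rep_sum rep_mult assms(1))
qed

lemma rep_det:
  assumes "\<And>i j. rep (\<lambda>e. A e $ i $ j) (AF $ i $ j)"
  shows "rep (\<lambda>e. det (A e)) (det AF)"
  unfolding det_def
proof (intro rep_sum rep_mult rep_prod assms)
  fix p show "rep (\<lambda>e. of_int (sign p)) (of_int (sign p))"
    using rep_const[of "of_int (sign p)"] by (simp add: fps_of_int)
qed

lemma rep_NtG:
  assumes "\<And>i j. rep (\<lambda>e. M e i j) (MF i j)"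
  shows "rep (\<lambda>e. NtG (M e) b0 $ i $ j) (NtG MF b0 $ i $ j)"
  unfolding NtG_def using rep_const[of 1] rep_const[of 0]
  by (auto intro!: rep_diff rep_minus assms)

lemma rep_CkG:
  assumes "\<And>i j. rep (\<lambda>e. M e i j) (MF i j)"
  shows "rep (\<lambda>e. CkG (M e) b0 k $ i $ j) (CkG MF b0 k $ i $ j)"
  unfolding CkG_def bvec_def using rep_const[of 1] rep_const[of 0] rep_NtG[OF assms]
  by auto

lemma word_stat:
  fixes M :: "'b::finite \<Rightarrow> 'b \<Rightarrow> real"
  assumes sd: "stationary_dist M (stat M)"
  shows "word_prob Phi M w = (\<Sum>x\<in>UNIV. stat M x * ppg Phi M w (\<lambda>_. 1) x)"
proof (cases w)
  case Nil thus ?thesis using sd by (simp add: stationary_dist_def)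
next
  case (Cons a w')
  have st: "\<And>y. (\<Sum>x\<in>UNIV. stat M x * M x y) = stat M y" using sd by (simp add: stationary_dist_def)
  have "word_prob Phi M w = (\<Sum>y\<in>{y. Phi y = a}. stat M y * path_prob Phi M y w')" by (simp add: Cons)
  also have "\<dots> = (\<Sum>y\<in>{y. Phi y = a}. (\<Sum>x\<in>UNIV. stat M x * M x y) * path_prob Phi M y w')"
    by (simp add: st)
  also have "\<dots> = (\<Sum>y\<in>{y. Phi y = a}. \<Sum>x\<in>UNIV. stat M x * (M x y * path_prob Phi M y w'))"
    by (simp add: sum_distrib_right mult.assoc)
  also have "\<dots> = (\<Sum>x\<in>UNIV. \<Sum>y\<in>{y. Phi y = a}. stat M x * (M x y * path_prob Phi M y w'))"
    by (rule sum.swap)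
  also have "\<dots> = (\<Sum>x\<in>UNIV. stat M x * ppg Phi M w (\<lambda>_. 1) x)"
    by (simp add: Cons sum_distrib_left path_prob_ppg)
  finally show ?thesis .
qed

lemma QA: "(\<Sum>x\<in>UNIV. S x * ppg Phi M (v @ w) c x) = (\<Sum>i\<in>UNIV. (\<Sum>x\<in>UNIV. S x * Tg Phi M v x i) * ppg Phi M w c i)"
proof -
  have "(\<Sum>x\<in>UNIV. S x * ppg Phi M (v @ w) c x) = (\<Sum>x\<in>UNIV. S x * (\<Sum>i\<in>UNIV. Tg Phi M v x i * ppg Phi M w c i))"
    by (simp add: ppg_append ppg_T[of Phi M v "ppg Phi M w c"])
  also have "\<dots> = (\<Sum>x\<in>UNIV. \<Sum>i\<in>UNIV. S x * Tg Phi M v x i * ppg Phi M w c i)"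
    by (simp add: sum_distrib_left mult.assoc)
  also have "\<dots> = (\<Sum>i\<in>UNIV. \<Sum>x\<in>UNIV. S x * Tg Phi M v x i * ppg Phi M w c i)" by (rule sum.swap)
  also have "\<dots> = (\<Sum>i\<in>UNIV. (\<Sum>x\<in>UNIV. S x * Tg Phi M v x i) * ppg Phi M w c i)"
    by (simp add: sum_distrib_right)
  finally show ?thesis .
qed

lemma ppg_bounds:
  fixes M :: "'b::finite \<Rightarrow> 'b \<Rightarrow> real"
  assumes "stochastic M"
  shows "0 \<le> ppg Phi M u (\<lambda>_. 1) y \<and> ppg Phi M u (\<lambda>_. 1) y \<le> 1"
proof (induction u arbitrary: y)
  case Nil thus ?case by simp
next
  case (Cons a u)
  have M0: "\<And>i j. M i j \<ge> 0" and M1: "\<And>i. (\<Sum>j\<in>UNIV. M i j) = 1" using assms by (auto simp: stochastic_def)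
  have "ppg Phi M (a # u) (\<lambda>_. 1) y \<le> (\<Sum>k\<in>{k. Phi k = a}. M y k)"
    by (simp, intro sum_mono) (use Cons M0 in \<open>auto intro: mult_left_le\<close>)
  also have "\<dots> \<le> (\<Sum>k\<in>UNIV. M y k)" by (intro sum_mono2) (auto simp: M0)
  finally have "ppg Phi M (a # u) (\<lambda>_. 1) y \<le> 1" using M1 by simp
  moreover have "0 \<le> ppg Phi M (a # u) (\<lambda>_. 1) y"
    by (simp, intro sum_nonneg) (use Cons M0 in auto)
  ultimately show ?case by simp
qed

lemma Tg_nonneg:
  fixes M :: "'b::finite \<Rightarrow> 'b \<Rightarrow> real"
  assumes "\<And>i j. M i j \<ge> 0"
  shows "Tg Phi M v x y \<ge> 0"
  by (induction v arbitrary: x) (auto intro!: sum_nonneg simp: assms)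

lemma abs_le_of_ratio: "b \<noteq> 0 \<Longrightarrow> \<bar>a / b\<bar> \<le> 1 \<Longrightarrow> \<bar>a::real\<bar> \<le> \<bar>b\<bar>"
  by (simp add: abs_divide divide_le_eq_1)

lemma bilin:
  fixes a b U V :: "'b::finite \<Rightarrow> 'r::comm_ring_1"
  shows "(\<Sum>i\<in>UNIV. a i * U i) * (\<Sum>j\<in>UNIV. b j * V j) - (\<Sum>j\<in>UNIV. b j * U j) * (\<Sum>i\<in>UNIV. a i * V i)
    = (\<Sum>i\<in>UNIV. \<Sum>j\<in>UNIV. a i * b j * (U i * V j - U j * V i))"
proof -
  have "(\<Sum>j\<in>UNIV. b j * U j) * (\<Sum>i\<in>UNIV. a i * V i) = (\<Sum>j\<in>UNIV. \<Sum>i\<in>UNIV. b j * U j * (a i * V i))"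
    by (simp add: sum_product)
  also have "\<dots> = (\<Sum>i\<in>UNIV. \<Sum>j\<in>UNIV. b j * U j * (a i * V i))" by (rule sum.swap)
  finally have e: "(\<Sum>j\<in>UNIV. b j * U j) * (\<Sum>i\<in>UNIV. a i * V i) = (\<Sum>i\<in>UNIV. \<Sum>j\<in>UNIV. b j * U j * (a i * V i))" .
  show ?thesis unfolding e by (simp add: sum_product sum_subtractf[symmetric] algebra_simps)
qed



lemma main:
  fixes Phi :: "'b::finite \<Rightarrow> 'a" and D :: "real \<Rightarrow> 'b \<Rightarrow> 'b \<Rightarrow> real"
  assumes stoch: "\<forall>e\<ge>0. stochastic (D e)" and normal: "normally_parameterized Phi D"
    and oz: "ord0 (cond_prob Phi D u v) \<le> enat k"
    and ozh: "ord0 (cond_prob Phi D u vh) \<le> enat k"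
    and jn: "j + 2 * k < length u"
  shows "taylor_coeffs (cond_prob Phi D [z0] (v @ u)) j = taylor_coeffs (cond_prob Phi D [z0] (vh @ u)) j"
proof -
  have an: "\<And>i j. analytic_at_zero (\<lambda>e. D e i j)" and irr: "\<And>e. e > 0 \<Longrightarrow> irreducible_matrix (D e)"
    and wbh: "weak_black_hole Phi (D 0)" using normal by (auto simp: normally_parameterized_def)
  have ste: "\<And>e. e > 0 \<Longrightarrow> stochastic (D e)" using stoch by auto
  define DF where "DF i j = (SOME F. rep (\<lambda>e. D e i j) F \<and> fps_nth F 0 = D 0 i j)" for i j
  have DF: "rep (\<lambda>e. D e i j) (DF i j) \<and> fps_nth (DF i j) 0 = D 0 i j" for i j
    unfolding DF_def by (rule someI_ex, rule analytic_rep[OF an])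
  have repD: "\<And>i j. rep (\<lambda>e. D e i j) (DF i j)" using DF by blast
  have mn: "low 1 (DF i k' * DF j' l - DF i l * DF j' k')" if "Phi k' = a" "Phi l = a" for a i j' k' l
  proof -
    have "fps_nth (DF i k' * DF j' l - DF i l * DF j' k') 0 = D 0 i k' * D 0 j' l - D 0 i l * D 0 j' k'"
      using DF by simp
    also have "\<dots> = 0" by (rule black_hole_minor[OF wbh that])
    finally show ?thesis by (simp add: low_def)
  qed
  obtain b0 :: 'b where True by simp
  have sc: "stationary_dist (D e) (stat (D e)) \<and> stat (D e) y = det (CkG (D e) b0 y) / det (NtG (D e) b0)"
    if "e > 0" for e y
    using stat_cramer[OF ste[OF that] irr[OF that]] by blast
  have rep1: "rep (\<lambda>e. 1) 1" using rep_const[of 1] by simp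
  have SF_ex: "\<exists>F. rep (\<lambda>e. stat (D e) y) F" for y
  proof -
    have r1: "rep (\<lambda>e. det (CkG (D e) b0 y)) (det (CkG DF b0 y))" by (intro rep_det rep_CkG repD)
    have r2: "rep (\<lambda>e. det (NtG (D e) b0)) (det (NtG DF b0))" by (intro rep_det rep_NtG repD)
    have "eventually (\<lambda>e. \<bar>det (CkG (D e) b0 y)\<bar> \<le> \<bar>det (NtG (D e) b0)\<bar>) (at_right 0)"
      using ev_pos
    proof eventually_elim
      case (elim e)
      have nz: "det (NtG (D e) b0) \<noteq> 0" by (rule NtG_det_nz[OF ste[OF elim] irr[OF elim]])
      have sd: "stationary_dist (D e) (stat (D e))" and eq: "stat (D e) y = det (CkG (D e) b0 y) / det (NtG (D e) b0)"
        using sc[OF elim] by auto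
      have nn: "\<And>i. stat (D e) i \<ge> 0" and s1: "(\<Sum>i\<in>UNIV. stat (D e) i) = 1"
        using sd by (auto simp: stationary_dist_def)
      have "stat (D e) y \<le> (\<Sum>i\<in>UNIV. stat (D e) i)" by (rule member_le_sum) (auto simp: nn)
      hence "\<bar>stat (D e) y\<bar> \<le> 1" using s1 nn[of y] by simp
      thus ?case using eq nz by (intro abs_le_of_ratio) auto
    qed
    from rep_ratio[OF r1 r2 this] obtain F where F: "rep (\<lambda>e. det (CkG (D e) b0 y) / det (NtG (D e) b0)) F" by blast
    have "eventually (\<lambda>e. det (CkG (D e) b0 y) / det (NtG (D e) b0) = stat (D e) y) (at_right 0)"
      using ev_pos by eventually_elim (simp add: sc)
    from rep_cong[OF F this] show ?thesis by blast
  qed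
  define SF where "SF y = (SOME F. rep (\<lambda>e. stat (D e) y) F)" for y
  have repS: "rep (\<lambda>e. stat (D e) y) (SF y)" for y using SF_ex unfolding SF_def by (rule someI_ex)
  have repP: "rep (\<lambda>e. ppg Phi (D e) w (\<lambda>_. 1) y) (ppg Phi DF w (\<lambda>_. 1) y)" for w y
    by (rule rep_ppg[where M="\<lambda>e. D e" and c="\<lambda>e _. 1"]) (auto intro: repD rep1)
  define QF where "QF w = (\<Sum>x\<in>UNIV. SF x * ppg Phi DF w (\<lambda>_. 1) x)" for w
  have repQ: "rep (\<lambda>e. word_prob Phi (D e) w) (QF w)" for w
  proof -
    have "rep (\<lambda>e. \<Sum>x\<in>UNIV. stat (D e) x * ppg Phi (D e) w (\<lambda>_. 1) x) (QF w)"
      unfolding QF_def by (intro rep_sum rep_mult repS repP)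
    moreover have "eventually (\<lambda>e. (\<Sum>x\<in>UNIV. stat (D e) x * ppg Phi (D e) w (\<lambda>_. 1) x) = word_prob Phi (D e) w) (at_right 0)"
      using ev_pos by eventually_elim (simp add: word_stat[OF sc[THEN conjunct1]])
    ultimately show ?thesis by (rule rep_cong)
  qed
  define Ar where "Ar e w i = (\<Sum>x\<in>UNIV. stat (D e) x * Tg Phi (D e) w x i)" for e w i
  have Ar_nn: "Ar e w i \<ge> 0" if "e > 0" for e w i
  proof -
    have "\<And>x. stat (D e) x \<ge> 0" using sc[OF that, THEN conjunct1] by (auto simp: stationary_dist_def)
    moreover have "\<And>i j. D e i j \<ge> 0" using ste[OF that] by (auto simp: stochastic_def)
    ultimately show ?thesis unfolding Ar_def by (intro sum_nonneg mult_nonneg_nonneg Tg_nonneg) auto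
  qed
  have word_A: "word_prob Phi (D e) (w @ w') = (\<Sum>i\<in>UNIV. Ar e w i * ppg Phi (D e) w' (\<lambda>_. 1) i)" if "e > 0" for e w w'
    unfolding Ar_def word_stat[OF sc[OF that, THEN conjunct1]] by (rule QA)
  have word_A0: "word_prob Phi (D e) w = (\<Sum>i\<in>UNIV. Ar e w i)" if "e > 0" for e w
    using word_A[OF that, of w "[]"] by simp
  have wb: "0 \<le> word_prob Phi (D e) (w @ w') \<and> word_prob Phi (D e) (w @ w') \<le> word_prob Phi (D e) w"
    if "e > 0" for e w w'
  proof -
    have pb: "\<And>i. 0 \<le> ppg Phi (D e) w' (\<lambda>_. 1) i \<and> ppg Phi (D e) w' (\<lambda>_. 1) i \<le> 1"
      by (rule ppg_bounds[OF ste[OF that]])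
    have "0 \<le> (\<Sum>i\<in>UNIV. Ar e w i * ppg Phi (D e) w' (\<lambda>_. 1) i)"
      using pb Ar_nn[OF that] by (intro sum_nonneg) auto
    moreover have "(\<Sum>i\<in>UNIV. Ar e w i * ppg Phi (D e) w' (\<lambda>_. 1) i) \<le> (\<Sum>i\<in>UNIV. Ar e w i)"
      using pb Ar_nn[OF that] by (intro sum_mono) (auto intro: mult_left_le)
    ultimately show ?thesis using word_A[OF that] word_A0[OF that] by simp
  qed
  have condeq: "cond_prob Phi D w' w = (\<lambda>e. word_prob Phi (D e) (w @ w') / word_prob Phi (D e) w)" for w w'
    by (simp add: cond_prob_def fun_eq_iff)
  have cond_ex: "\<exists>F. rep (cond_prob Phi D w' w) F" for w w'
  proof -
    have "eventually (\<lambda>e. \<bar>word_prob Phi (D e) (w @ w')\<bar> \<le> \<bar>word_prob Phi (D e) w\<bar>) (at_right 0)"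
      using ev_pos
    proof eventually_elim
      case (elim e)
      from wb[OF elim, of w w'] show ?case by simp
    qed
    from rep_ratio[OF repQ repQ this] show ?thesis unfolding condeq .
  qed
  have cond_id: "F * QF w = QF (w @ w')" if F: "rep (cond_prob Phi D w' w) F" for F w w'
  proof -
    have "rep (\<lambda>e. cond_prob Phi D w' w e * word_prob Phi (D e) w) (F * QF w)" by (rule rep_mult[OF F repQ])
    moreover have "eventually (\<lambda>e. cond_prob Phi D w' w e * word_prob Phi (D e) w = word_prob Phi (D e) (w @ w')) (at_right 0)"
      using ev_pos
    proof eventually_elim
      case (elim e)
      show ?case
      proof (cases "word_prob Phi (D e) w = 0")
        case True thus ?thesis using wb[OF elim, of w w'] by simp
      next
        case False thus ?thesis by (simp add: cond_prob_def)
      qed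
    qed
    ultimately have "rep (\<lambda>e. word_prob Phi (D e) (w @ w')) (F * QF w)" by (rule rep_cong)
    thus ?thesis using repQ rep_unique by blast
  qed
  have cond_nz: "QF w \<noteq> 0" if F: "rep (cond_prob Phi D w' w) F" and Fnz: "F \<noteq> 0" for F w w'
  proof
    assume "QF w = 0"
    hence "eventually (\<lambda>e. word_prob Phi (D e) w = 0) (at_right 0)" using repQ[of w] by (simp add: rep_def)
    hence "eventually (\<lambda>e. 0 = cond_prob Phi D w' w e) (at_right 0)"
      by eventually_elim (simp add: cond_prob_def)
    hence "rep (cond_prob Phi D w' w) 0" using rep_cong[OF rep_const[of 0]] by simp
    thus False using rep_unique[OF F] Fnz by blast
  qed
  obtain Cz where Cz: "rep (cond_prob Phi D u v) Cz" using cond_ex by blast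
  obtain Ch where Ch: "rep (cond_prob Phi D u vh) Ch" using cond_ex by blast
  have Cz1: "Cz \<noteq> 0" "subdegree Cz \<le> k" using ord0_rep[OF Cz oz] by auto
  have Ch1: "Ch \<noteq> 0" "subdegree Ch \<le> k" using ord0_rep[OF Ch ozh] by auto
  have Qv: "QF v \<noteq> 0" by (rule cond_nz[OF Cz Cz1(1)])
  have Qvh: "QF vh \<noteq> 0" by (rule cond_nz[OF Ch Ch1(1)])
  have Qvu: "QF (v @ u) = Cz * QF v" using cond_id[OF Cz] by simp
  have Qvhu: "QF (vh @ u) = Ch * QF vh" using cond_id[OF Ch] by simp
  obtain Fz where Fz: "rep (cond_prob Phi D [z0] (v @ u)) Fz" using cond_ex by blast
  obtain Fh where Fh: "rep (cond_prob Phi D [z0] (vh @ u)) Fh" using cond_ex by blast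
  have Fz1: "Fz * QF (v @ u) = QF ((v @ u) @ [z0])" by (rule cond_id[OF Fz])
  have Fh1: "Fh * QF (vh @ u) = QF ((vh @ u) @ [z0])" by (rule cond_id[OF Fh])
  define AF where "AF w i = (\<Sum>x\<in>UNIV. SF x * Tg Phi DF w x i)" for w i
  have repA: "rep (\<lambda>e. Ar e w i) (AF w i)" for w i
    unfolding Ar_def AF_def by (intro rep_sum rep_mult repS rep_Tg repD)
  have lowA: "low (subdegree (QF w)) (AF w i)" if "QF w \<noteq> 0" for w i
  proof (rule rep_compare[OF repA repQ that])
    show "eventually (\<lambda>e. \<bar>Ar e w i\<bar> \<le> \<bar>word_prob Phi (D e) w\<bar>) (at_right 0)"
      using ev_pos
    proof eventually_elim
      case (elim e)
      have "Ar e w i \<le> (\<Sum>i\<in>UNIV. Ar e w i)" by (rule member_le_sum) (auto intro: Ar_nn[OF elim])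
      thus ?case using word_A0[OF elim, of w] Ar_nn[OF elim, of w i] by simp
    qed
  qed
  have QFA: "QF (w @ w') = (\<Sum>i\<in>UNIV. AF w i * ppg Phi DF w' (\<lambda>_. 1) i)" for w w'
    unfolding QF_def AF_def by (rule QA)
  define U where "U i = ppg Phi DF u (ppg Phi DF [z0] (\<lambda>_. 1)) i" for i
  define V where "V i = ppg Phi DF u (\<lambda>_. 1) i" for i
  have QU: "QF ((w @ u) @ [z0]) = (\<Sum>i\<in>UNIV. AF w i * U i)" for w
    using QFA[of w "u @ [z0]"] by (simp add: U_def ppg_append)
  have QV: "QF (w @ u) = (\<Sum>i\<in>UNIV. AF w i * V i)" for w
    using QFA[of w u] by (simp add: V_def)
  define W where "W = QF ((v @ u) @ [z0]) * QF (vh @ u) - QF ((vh @ u) @ [z0]) * QF (v @ u)"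
  have Weq: "W = (\<Sum>i\<in>UNIV. \<Sum>j\<in>UNIV. AF v i * AF vh j * (U i * V j - U j * V i))"
    unfolding W_def QU QV by (rule bilin)
  have lowW: "low (subdegree (QF v) + subdegree (QF vh) + length u) W"
    unfolding Weq
  proof (intro low_sum)
    fix i j'
    show "low (subdegree (QF v) + subdegree (QF vh) + length u) (AF v i * AF vh j' * (U i * V j' - U j' * V i))"
      by (intro low_mult lowA Qv Qvh) (unfold U_def V_def, rule minor_lemma, rule mn)
  qed
  define G where "G = Fz - Fh"
  have GW: "G * (QF (v @ u) * QF (vh @ u)) = W"
  proof -
    have "G * (QF (v @ u) * QF (vh @ u)) = (Fz * QF (v @ u)) * QF (vh @ u) - (Fh * QF (vh @ u)) * QF (v @ u)"
      by (simp add: G_def algebra_simps)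
    thus ?thesis unfolding Fz1 Fh1 W_def .
  qed
  have "fps_nth G j = 0"
  proof (cases "G = 0")
    case True thus ?thesis by simp
  next
    case Gnz: False
    have Q1: "QF (v @ u) \<noteq> 0" using Qvu Cz1 Qv by simp
    have Q2: "QF (vh @ u) \<noteq> 0" using Qvhu Ch1 Qvh by simp
    have "W \<noteq> 0" using GW Gnz Q1 Q2 by auto
    from low_subdeg[OF this lowW]
    have "subdegree (QF v) + subdegree (QF vh) + length u \<le> subdegree W" .
    also have "subdegree W = subdegree G + (subdegree Cz + subdegree (QF v)) + (subdegree Ch + subdegree (QF vh))"
      using GW[symmetric] Gnz Q1 Q2 Qvu Qvhu Cz1 Ch1 Qv Qvh by simp
    finally have "length u \<le> subdegree G + subdegree Cz + subdegree Ch" by simp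
    hence "j < subdegree G" using Cz1 Ch1 jn by linarith
    thus ?thesis by (rule nth_less_subdegree_zero)
  qed
  hence "fps_nth Fz j = fps_nth Fh j" by (simp add: G_def)
  thus ?thesis using taylor_rep[OF Fz] taylor_rep[OF Fh] by simp
qed


theorem lemma2p5:
  fixes Phi :: "'b::finite \<Rightarrow> 'a::finite"
    and D :: "real \<Rightarrow> 'b \<Rightarrow> 'b \<Rightarrow> real"
    and z zh :: "'a list"
    and m mh n k :: nat
  assumes stoch: "\<forall>e\<ge>0. stochastic (D e)"
    and normal: "normally_parameterized Phi D"
    and len_z: "length z = m + 1"
    and len_zh: "length zh = mh + 1"
    and n_le: "n \<le> m" "n \<le> mh"
    and agree: "drop (m - n) z = drop (mh - n) zh"
    and ord_z: "ord0 (cond_prob Phi D (take n (drop (m - n) z)) (take (m - n) z)) \<le> enat k"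
    and ord_zh: "ord0 (cond_prob Phi D (take n (drop (mh - n) zh)) (take (mh - n) zh)) \<le> enat k"
  shows "\<forall>j. j + 4 * k + 1 \<le> n \<longrightarrow> bcoeff Phi D j z = bcoeff Phi D j zh"
proof (intro allI impI)
  fix j assume jle: "j + 4 * k + 1 \<le> n"
  define v where "v = take (m - n) z"
  define vh where "vh = take (mh - n) zh"
  define d where "d = drop (m - n) z"
  define u where "u = take n d"
  have ld: "length d = n + 1" using len_z n_le by (simp add: d_def)
  have dne: "d \<noteq> []" using ld by auto
  have bd: "butlast d = u" using ld by (simp add: u_def butlast_conv_take)
  have z1: "z = v @ d" by (simp add: v_def d_def)
  have zh1: "zh = vh @ d" by (simp add: vh_def d_def agree)
  have bz: "butlast z = v @ u" using z1 dne bd by (metis butlast_append)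
  have bzh: "butlast zh = vh @ u" using zh1 dne bd by (metis butlast_append)
  have lz: "last z = last d" using z1 dne by (metis last_append)
  have lzh: "last zh = last d" using zh1 dne by (metis last_append)
  have lu: "length u = n" using ld by (simp add: u_def)
  have oz: "ord0 (cond_prob Phi D u v) \<le> enat k" using ord_z by (simp add: u_def d_def v_def)
  have ozh: "ord0 (cond_prob Phi D u vh) \<le> enat k" using ord_zh by (simp add: u_def d_def vh_def agree)
  have jn: "j + 2 * k < length u" using jle lu by simp
  have "taylor_coeffs (cond_prob Phi D [last d] (v @ u)) j = taylor_coeffs (cond_prob Phi D [last d] (vh @ u)) j"
    by (rule main[OF stoch normal oz ozh jn])
  thus "bcoeff Phi D j z = bcoeff Phi D j zh" by (simp add: bcoeff_def bz bzh lz lzh)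
qed

end
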